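(* Let $n\ge 3$ and let $\mathcal T$ be an admissible family of arcs with endpoints in $[n]$. Then the vectors $\{e_i-e_j : [i,j)\in\mathcal T\}\subset\mathbb{R}^n$ are affinely independent, and their convex hull is a non-degenerate simplex contained in the boundary of $Root_n$. Consequently, the map $\phi_n:|\mathcal K_n|\to\mathbb{R}^n$ is injective on each simplex and maps each simplex into $\partial(Root_n)$.
   Context: Identify $[n]$ with the vertices of a regular $n$-gon in $S^1$, labelled counterclockwise, with counterclockwise order $\preceq$; for $a\ne b\in[n]$, $[a,b)=\{z\in S^1:a\preceq z\prec b\}$. A finite collection of such arcs is admissible if any two distinct members $I,J$ are either intersecting and strictly nested, or disjoint with the sink of neither equal to the source of the other. $\mathcal K_n$ is the simplicial complex on the $n(n-1)$ arcs $[i,j)$, $i\neq j$, whose simplices are the nonempty admissible families. $\{e_i\}$ is the standard basis of $\mathbb{R}^n$, $Root_n=\mathrm{Conv}\{e_i-e_j:1\le i\ne j\le n\}$, a polytope of dimension $n-1$ in $H_0=\{x:\sum x_i=0\}$; its boundary is taken relative to $H_0$. $\phi_n:|\mathcal K_n|\to\mathbb{R}^n$ is the map that is affine on each simplex and sends the vertex $[i,j)$ to $e_i-e_j$. *)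

theory Defs
  imports "HOL-Analysis.Analysis"
begin

text \<open>The vertex set [n] is the finite type 'n (n = CARD('n)).  The labelling
  lab : 'n -> {0..<n} (a bijection) places vertex v at position lab v on the circle
  S^1, modelled as the half-open real interval [0,n) with its ends identified;
  counterclockwise = increasing position (mod n).  The standard basis vector
  e_v of R^n is axis v 1 in real^'n.\<close>

definition ccw_off :: "real \<Rightarrow> real \<Rightarrow> real \<Rightarrow> real" where
  "ccw_off N x z = (if x \<le> z then z - x else z - x + N)"

text \<open>The arc [i,j) = {z in S^1 : i \<preceq> z \<prec> j}, as a subset of the circle.\<close>
definition arc :: "('n::finite \<Rightarrow> nat) \<Rightarrow> 'n \<times> 'n \<Rightarrow> real set" where
  "arc lab I = {z. 0 \<le> z \<and> z < real CARD('n) \<and>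
      ccw_off (real CARD('n)) (real (lab (fst I))) z
        < ccw_off (real CARD('n)) (real (lab (fst I))) (real (lab (snd I)))}"

definition admissible :: "('n::finite \<Rightarrow> nat) \<Rightarrow> ('n \<times> 'n) set \<Rightarrow> bool" where
  "admissible lab T \<longleftrightarrow> finite T \<and> (\<forall>I\<in>T. fst I \<noteq> snd I) \<and>
     (\<forall>I\<in>T. \<forall>J\<in>T. I \<noteq> J \<longrightarrow>
        (arc lab I \<inter> arc lab J \<noteq> {} \<and> (arc lab I \<subset> arc lab J \<or> arc lab J \<subset> arc lab I))
      \<or> (arc lab I \<inter> arc lab J = {} \<and> snd I \<noteq> fst J \<and> snd J \<noteq> fst I))"

definition root_vec :: "'n::finite \<times> 'n \<Rightarrow> real^'n" where
  "root_vec I = axis (fst I) 1 - axis (snd I) 1"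

definition Root :: "(real^'n::finite) set" where
  "Root = convex hull {axis i 1 - axis j 1 | i j. i \<noteq> j}"

text \<open>Points of the closed geometric simplex of |K_n| spanned by the family T,
  as barycentric weight functions on the vertex set (arcs).\<close>
definition simplex_pts :: "('n::finite \<times> 'n) set \<Rightarrow> ('n \<times> 'n \<Rightarrow> real) set" where
  "simplex_pts T = {w. (\<forall>I. 0 \<le> w I) \<and> (\<forall>I. I \<notin> T \<longrightarrow> w I = 0) \<and> sum w T = 1}"

definition phi :: "('n::finite \<times> 'n \<Rightarrow> real) \<Rightarrow> real^'n" where
  "phi w = (\<Sum>I\<in>{I. fst I \<noteq> snd I}. w I *\<^sub>R root_vec I)"

end

theory Submission
  imports Defs
begin


definition offn :: "nat \<Rightarrow> nat \<Rightarrow> nat \<Rightarrow> nat" where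
  "offn N a k = (if a \<le> k then k - a else k + N - a)"
definition prn :: "nat \<Rightarrow> nat \<Rightarrow> nat" where
  "prn N b = (if b = 0 then N - 1 else b - 1)"

lemma arc_int:
  fixes lab :: "'n::finite \<Rightarrow> nat"
  assumes "lab (fst I) < CARD('n)" "lab (snd I) < CARD('n)" "k < CARD('n)"
  shows "real k \<in> arc lab I \<longleftrightarrow> offn CARD('n) (lab (fst I)) k < offn CARD('n) (lab (fst I)) (lab (snd I))"
  using assms unfolding arc_def ccw_off_def offn_def
  by (auto simp: of_nat_diff)

lemma ar1:
  assumes "a < N" "b < N" "c < N" "a \<noteq> b" "b \<noteq> c"
  shows "offn N a (prn N b) < offn N a b" "\<not> offn N b (prn N b) < offn N b c"
    "offn N b b < offn N b c" "prn N b < N"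
  using assms unfolding offn_def prn_def by (auto split: if_splits)

lemma ar2:
  assumes "a < N" "b < N" "c < N" "d < N" "a \<noteq> b" "a \<noteq> c" "b \<noteq> c" "d \<noteq> b" "d \<noteq> a"
  shows "offn N d (prn N b) < offn N d b" "offn N a a < offn N a c" "offn N d a < offn N d b \<Longrightarrow> offn N d (prn N a) < offn N d b"
    "\<not> offn N a (prn N a) < offn N a c" "offn N a (prn N b) < offn N a c \<Longrightarrow> offn N a b < offn N a c"
    "\<not> offn N d b < offn N d b" "prn N a < N"
  using assms unfolding offn_def prn_def by (auto split: if_splits)


lemma lab_lt: "bij_betw lab UNIV {0..<CARD('n::finite)} \<Longrightarrow> lab (x::'n) < CARD('n)"
  by (auto simp: bij_betw_def)

lemma lab_inj: "bij_betw lab UNIV {0..<CARD('n::finite)} \<Longrightarrow> lab (x::'n) = lab y \<longleftrightarrow> x = y"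
  by (auto simp: bij_betw_def inj_def)

lemma adm_pair:
  assumes "admissible lab T" "I \<in> T" "J \<in> T" "I \<noteq> J"
  shows "(arc lab I \<inter> arc lab J \<noteq> {} \<and> (arc lab I \<subset> arc lab J \<or> arc lab J \<subset> arc lab I))
      \<or> (arc lab I \<inter> arc lab J = {} \<and> snd I \<noteq> fst J \<and> snd J \<noteq> fst I)"
  using assms unfolding admissible_def by blast

lemma adm_ne: "admissible lab T \<Longrightarrow> I \<in> T \<Longrightarrow> fst I \<noteq> snd I"
  unfolding admissible_def by blast

lemma no_sink_source:
  fixes lab :: "'n::finite \<Rightarrow> nat"
  assumes bij: "bij_betw lab UNIV {0..<CARD('n)}" and adm: "admissible lab T"
    and I: "I \<in> T" and J: "J \<in> T" and eq: "snd I = fst J"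
  shows False
proof -
  let ?N = "CARD('n)"
  define a where "a = lab (fst I)"
  define b where "b = lab (snd I)"
  define c where "c = lab (snd J)"
  have lt: "a < ?N" "b < ?N" "c < ?N" unfolding a_def b_def c_def using lab_lt[OF bij] by auto
  have ab: "a \<noteq> b" using adm_ne[OF adm I] lab_inj[OF bij] unfolding a_def b_def by auto
  have bc: "b \<noteq> c" using adm_ne[OF adm J] lab_inj[OF bij] eq unfolding b_def c_def by auto
  have IJ: "I \<noteq> J" using adm_ne[OF adm I] eq by auto
  note A = ar1[OF lt ab bc]
  have fJ: "lab (fst J) = b" using eq b_def by simp
  have p1: "real (prn ?N b) \<in> arc lab I" using A arc_int[of lab I "prn ?N b"] lt a_def b_def by simp
  have p2: "real (prn ?N b) \<notin> arc lab J" using A arc_int[of lab J "prn ?N b"] lt fJ c_def by simp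
  have p3: "real b \<in> arc lab J" using A arc_int[of lab J b] lt fJ c_def by simp
  have p4: "real b \<notin> arc lab I" using arc_int[of lab I b] lt a_def b_def by simp
  from adm_pair[OF adm I J IJ] p1 p2 p3 p4 eq show False by blast
qed

lemma leaf:
  fixes lab :: "'n::finite \<Rightarrow> nat"
  assumes bij: "bij_betw lab UNIV {0..<CARD('n)}" and adm: "admissible lab T" and ne: "T \<noteq> {}"
  shows "\<exists>I\<in>T. \<exists>v. (v = fst I \<or> v = snd I) \<and> (\<forall>J\<in>T. J \<noteq> I \<longrightarrow> fst J \<noteq> v \<and> snd J \<noteq> v)"
proof -
  let ?N = "CARD('n)"
  have fin: "finite T" using adm unfolding admissible_def by blast
  obtain X where X: "X \<in> arc lab ` T" "\<forall>Y\<in>arc lab ` T. Y \<le> X \<longrightarrow> X = Y"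
    using finite_has_minimal[of "arc lab ` T"] fin ne by blast
  then obtain I where I: "I \<in> T" and min: "\<And>J. J \<in> T \<Longrightarrow> \<not> arc lab J \<subset> arc lab I" by blast
  show ?thesis
  proof (rule ccontr)
    assume "\<not> ?thesis"
    then obtain J1 J2 where J1: "J1 \<in> T" "J1 \<noteq> I" "fst J1 = fst I \<or> snd J1 = fst I"
      and J2: "J2 \<in> T" "J2 \<noteq> I" "fst J2 = snd I \<or> snd J2 = snd I" using I by blast
    have f1: "fst J1 = fst I" using J1 no_sink_source[OF bij adm J1(1) I] by metis
    have s2: "snd J2 = snd I" using J2 no_sink_source[OF bij adm I J2(1)] by metis
    define a where "a = lab (fst I)"
    define b where "b = lab (snd I)"
    define c where "c = lab (snd J1)"
    define d where "d = lab (fst J2)"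
    have lt: "a < ?N" "b < ?N" "c < ?N" "d < ?N" unfolding a_def b_def c_def d_def using lab_lt[OF bij] by auto
    have ab: "a \<noteq> b" using adm_ne[OF adm I] lab_inj[OF bij] unfolding a_def b_def by auto
    have ac: "a \<noteq> c" using adm_ne[OF adm J1(1)] lab_inj[OF bij] f1 unfolding a_def c_def by auto
    have bc: "b \<noteq> c" using J1(2) f1 lab_inj[OF bij] unfolding b_def c_def by (metis prod.collapse)
    have db: "d \<noteq> b" using adm_ne[OF adm J2(1)] lab_inj[OF bij] s2 unfolding d_def b_def by auto
    have da: "d \<noteq> a" using J2(2) s2 lab_inj[OF bij] unfolding d_def a_def by (metis prod.collapse)
    have J12: "J1 \<noteq> J2" using J1(2) f1 s2 by (metis prod.collapse)
    note A = ar2[OF lt ab ac bc db da] ar1(4)[OF lt(1,2,3) ab bc]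
    have fJ1: "lab (fst J1) = a" using f1 a_def by simp
    have sJ2: "lab (snd J2) = b" using s2 b_def by simp
    have m: "\<And>K k. K \<in> T \<Longrightarrow> k < ?N \<Longrightarrow> real k \<in> arc lab K \<longleftrightarrow> offn ?N (lab (fst K)) k < offn ?N (lab (fst K)) (lab (snd K))"
      using arc_int lab_lt[OF bij] by blast
    have aI: "real a \<in> arc lab I" using m[OF I, of a] lt ab A unfolding a_def b_def by (simp add: offn_def)
    have aJ1: "real a \<in> arc lab J1" using m[OF J1(1), of a] lt A fJ1 c_def by simp
    have "arc lab I \<subseteq> arc lab J1"
      using adm_pair[OF adm I J1(1) J1(2)[symmetric]] aI aJ1 min[OF J1(1)] by blast
    moreover have "real (prn ?N b) \<in> arc lab I"
      using m[OF I, of "prn ?N b"] lt ar1[OF lt(1,2,3) ab bc] unfolding a_def b_def by simp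
    ultimately have "real (prn ?N b) \<in> arc lab J1" by blast
    then have q1: "offn ?N a (prn ?N b) < offn ?N a c" using m[OF J1(1), of "prn ?N b"] lt fJ1 c_def A by simp
    have pbJ2: "real (prn ?N b) \<in> arc lab J2" using m[OF J2(1), of "prn ?N b"] lt A sJ2 d_def ar1[OF lt(1,2,3) ab bc] by simp
    have pbI: "real (prn ?N b) \<in> arc lab I"
      using m[OF I, of "prn ?N b"] lt ar1[OF lt(1,2,3) ab bc] unfolding a_def b_def by simp
    have "arc lab I \<subseteq> arc lab J2"
      using adm_pair[OF adm I J2(1) J2(2)[symmetric]] pbI pbJ2 min[OF J2(1)] by blast
    then have aJ2: "real a \<in> arc lab J2" using aI by blast
    then have q2: "offn ?N d a < offn ?N d b" using m[OF J2(1), of a] lt sJ2 d_def by simp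
    have bJ1: "real b \<in> arc lab J1" using m[OF J1(1), of b] lt fJ1 c_def A q1 by simp
    have bJ2: "real b \<notin> arc lab J2" using m[OF J2(1), of b] lt sJ2 d_def by simp
    have paJ2: "real (prn ?N a) \<in> arc lab J2" using m[OF J2(1), of "prn ?N a"] lt sJ2 d_def A q2 by simp
    have paJ1: "real (prn ?N a) \<notin> arc lab J1" using m[OF J1(1), of "prn ?N a"] lt fJ1 c_def A by simp
    have "arc lab J1 \<inter> arc lab J2 \<noteq> {}" using aJ1 aJ2 by blast
    moreover have "\<not> arc lab J1 \<subseteq> arc lab J2" using bJ1 bJ2 by blast
    moreover have "\<not> arc lab J2 \<subseteq> arc lab J1" using paJ1 paJ2 by blast
    ultimately show False using adm_pair[OF adm J1(1) J2(1) J12] by blast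
  qed
qed



lemma adm_subset: "admissible lab T \<Longrightarrow> S \<subseteq> T \<Longrightarrow> admissible lab S"
  unfolding admissible_def by (meson finite_subset subsetD)

lemma root_vec_comp: "root_vec I $ v = (if v = fst I then 1 else 0) - (if v = snd I then (1::real) else 0)"
  unfolding root_vec_def axis_def by simp

lemma lin_indep:
  fixes lab :: "'n::finite \<Rightarrow> nat"
  assumes "bij_betw lab UNIV {0..<CARD('n)}" "admissible lab T"
    "(\<Sum>I\<in>T. c I *\<^sub>R root_vec I) = 0" "I \<in> T"
  shows "c I = 0"
  using assms
proof (induction "card T" arbitrary: T I rule: less_induct)
  case less
  have fin: "finite T" using less.prems(2) unfolding admissible_def by blast
  obtain I0 v where I0: "I0 \<in> T" "v = fst I0 \<or> v = snd I0"
      and lf: "\<forall>J\<in>T. J \<noteq> I0 \<longrightarrow> fst J \<noteq> v \<and> snd J \<noteq> v"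
    using leaf[OF less.prems(1,2)] less.prems(4) by blast
  have "(\<Sum>J\<in>T. c J *\<^sub>R root_vec J) $ v = 0" using less.prems(3) by simp
  hence s0: "(\<Sum>J\<in>T. c J * (root_vec J $ v)) = 0" by simp
  have "(\<Sum>J\<in>T. c J * (root_vec J $ v)) = c I0 * (root_vec I0 $ v) + (\<Sum>J\<in>T - {I0}. c J * (root_vec J $ v))"
    using fin I0(1) by (simp add: sum.remove)
  also have "(\<Sum>J\<in>T - {I0}. c J * (root_vec J $ v)) = 0"
    by (rule sum.neutral) (use lf in \<open>auto simp: root_vec_comp\<close>)
  finally have "c I0 * (root_vec I0 $ v) = 0" using s0 by simp
  moreover have "root_vec I0 $ v \<noteq> 0" using I0 adm_ne[OF less.prems(2) I0(1)] by (auto simp: root_vec_comp)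
  ultimately have c0: "c I0 = 0" by simp
  show ?case
  proof (cases "I = I0")
    case True then show ?thesis using c0 by simp
  next
    case False
    have "(\<Sum>J\<in>T. c J *\<^sub>R root_vec J) = c I0 *\<^sub>R root_vec I0 + (\<Sum>J\<in>T - {I0}. c J *\<^sub>R root_vec J)"
      using fin I0(1) by (simp add: sum.remove)
    hence s1: "(\<Sum>J\<in>T - {I0}. c J *\<^sub>R root_vec J) = 0" using c0 less.prems(3) by simp
    have cl: "card (T - {I0}) < card T" by (rule card_Diff1_less[OF fin I0(1)])
    have ad: "admissible lab (T - {I0})" by (rule adm_subset[OF less.prems(2)]) blast
    have mI: "I \<in> T - {I0}" using less.prems(4) False by blast
    show ?thesis by (rule less.hyps[OF cl less.prems(1) ad s1 mI])
  qed
qed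

lemma sum_axis_diff:
  assumes "finite F"
  shows "(\<Sum>k\<in>F. (axis i 1 - axis j 1 :: real^'n::finite) $ k) = (if i \<in> F then 1 else 0) - (if j \<in> F then 1 else 0)"
proof -
  have "(\<Sum>k\<in>F. (axis i 1 - axis j 1 :: real^'n::finite) $ k) = (\<Sum>k\<in>F. (if k = i then 1 else 0) - (if k = j then (1::real) else 0))"
    by (intro sum.cong refl) (simp add: axis_def)
  also have "\<dots> = (\<Sum>k\<in>F. (if k = i then 1 else 0)) - (\<Sum>k\<in>F. (if k = j then (1::real) else 0))"
    by (rule sum_subtractf)
  also have "\<dots> = (if i \<in> F then 1 else 0) - (if j \<in> F then 1 else 0)"
    using sum.delta[OF assms, of i "\<lambda>_. 1::real"] sum.delta[OF assms, of j "\<lambda>_. 1::real"] by simp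
  finally show ?thesis .
qed

lemma inner_sumaxis:
  "(\<Sum>i\<in>F. axis i 1 :: real^'n::finite) \<bullet> x = (\<Sum>i\<in>F. x $ i)"
  by (simp add: inner_sum_left inner_axis')

theorem mainTheorem4:
  fixes lab :: "'n::finite \<Rightarrow> nat" and T :: "('n \<times> 'n) set"
  assumes "CARD('n) \<ge> 3"
    and "bij_betw lab UNIV {0..<CARD('n)}"
    and "admissible lab T"
  shows "inj_on root_vec T \<and> \<not> affine_dependent (root_vec ` T)
       \<and> aff_dim (convex hull (root_vec ` T)) = int (card T) - 1
       \<and> convex hull (root_vec ` T) \<subseteq> rel_frontier Root
       \<and> inj_on phi (simplex_pts T)
       \<and> phi ` simplex_pts T \<subseteq> rel_frontier Root"
proof -
  note bij = assms(2) and adm = assms(3)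
  have fin: "finite T" using adm unfolding admissible_def by blast
  note LI = lin_indep[OF bij]
  have inj: "inj_on root_vec T"
  proof (rule inj_onI, rule ccontr)
    fix I J assume IJ: "I \<in> T" "J \<in> T" "root_vec I = root_vec J" "I \<noteq> J"
    define c where "c = (\<lambda>K. if K = I then 1 else if K = J then -1 else (0::real))"
    have s2: "(\<Sum>K\<in>{I,J}. c K *\<^sub>R root_vec K) = 0" using IJ by (simp add: c_def)
    have a2: "admissible lab {I,J}" by (rule adm_subset[OF adm]) (use IJ in auto)
    have "c I = 0" using LI[OF a2 s2, of I] by simp
    thus False by (simp add: c_def)
  qed
  have nad: "\<not> affine_dependent (root_vec ` T)"
  proof
    assume "affine_dependent (root_vec ` T)"
    then obtain U where U: "\<exists>v\<in>root_vec ` T. U v \<noteq> 0" "(\<Sum>v\<in>root_vec ` T. U v *\<^sub>R v) = 0"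
      using affine_dependent_explicit_finite[of "root_vec ` T"] fin by auto
    have sU: "(\<Sum>I\<in>T. U (root_vec I) *\<^sub>R root_vec I) = 0"
      using U(2) sum.reindex[OF inj, of "\<lambda>v. U v *\<^sub>R v"] by simp
    have "\<forall>I\<in>T. U (root_vec I) = 0" using LI[OF adm sU] by blast
    with U(1) show False by blast
  qed
  have ad: "aff_dim (convex hull (root_vec ` T)) = int (card T) - 1"
    using aff_dim_convex_hull aff_dim_affine_independent[OF nad] card_image[OF inj] by simp
  define P where "P = ({axis i 1 - axis j 1 | i j. i \<noteq> j} :: (real^'n) set)"
  have RootP: "Root = convex hull P" unfolding Root_def P_def by simp
  have finP: "finite P"
  proof -
    have "P \<subseteq> (\<lambda>(i,j). axis i 1 - axis j 1) ` UNIV" unfolding P_def by auto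
    thus ?thesis by (rule finite_subset) simp
  qed
  have cR: "compact (Root :: (real^'n) set)" using finP by (simp add: RootP compact_convex_hull finite_imp_compact)
  have clR: "closure Root = (Root :: (real^'n) set)" by (rule closure_closed[OF compact_imp_closed[OF cR]])
  have vP: "root_vec I \<in> P" if "I \<in> T" for I
    using adm_ne[OF adm that] unfolding P_def root_vec_def by blast
  have sub_hull: "convex hull (root_vec ` T) \<subseteq> rel_frontier Root"
  proof (cases "T = {}")
    case True thus ?thesis by simp
  next
    case False
    then obtain I0 where I0: "I0 \<in> T" by blast
    define F where "F = fst ` T"
    have finF: "finite F" unfolding F_def using fin by simp
    define a where "a = (\<Sum>i\<in>F. axis i 1 :: real^'n)"
    have aP: "a \<bullet> (axis i 1 - axis j 1) = (if i \<in> F then 1 else 0) - (if j \<in> F then 1 else 0)" for i j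
      unfolding a_def inner_sumaxis using sum_axis_diff[OF finF] by simp
    have le: "a \<bullet> x \<le> 1" if "x \<in> Root" for x
    proof -
      have "P \<subseteq> {x. a \<bullet> x \<le> 1}" unfolding P_def using aP by auto
      hence "convex hull P \<subseteq> {x. a \<bullet> x \<le> 1}" by (rule hull_minimal) (rule convex_halfspace_le)
      thus ?thesis using that RootP by auto
    qed
    have face: "(Root \<inter> {x. a \<bullet> x = 1}) face_of Root"
      by (rule face_of_Int_supporting_hyperplane_le) (auto simp: RootP convex_convex_hull le[unfolded RootP])
    have v1: "a \<bullet> root_vec I = 1" if "I \<in> T" for I
    proof -
      have "fst I \<in> F" unfolding F_def using that by blast
      moreover have "snd I \<notin> F" unfolding F_def using no_sink_source[OF bij adm that] by blast
      ultimately show ?thesis unfolding root_vec_def aP by simp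
    qed
    have vR: "root_vec I \<in> Root" if "I \<in> T" for I
      unfolding RootP by (rule hull_inc[OF vP[OF that]])
    have "root_vec ` T \<subseteq> Root \<inter> {x. a \<bullet> x = 1}"
      using vR v1 by auto
    hence hsub: "convex hull (root_vec ` T) \<subseteq> Root \<inter> {x. a \<bullet> x = 1}"
      by (rule hull_minimal) (simp add: RootP convex_Int convex_convex_hull convex_hyperplane)
    have neq: "Root \<inter> {x. a \<bullet> x = 1} \<noteq> Root"
    proof
      assume eq: "Root \<inter> {x. a \<bullet> x = 1} = Root"
      have "axis (snd I0) 1 - axis (fst I0) 1 \<in> P" using adm_ne[OF adm I0] unfolding P_def
        by (intro CollectI exI[of _ "snd I0"] exI[of _ "fst I0"]) auto
      hence m: "axis (snd I0) 1 - axis (fst I0) 1 \<in> Root" unfolding RootP by (rule hull_inc)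
      have "fst I0 \<in> F" unfolding F_def using I0 by blast
      moreover have "snd I0 \<notin> F" unfolding F_def using no_sink_source[OF bij adm I0] by blast
      ultimately have "a \<bullet> (axis (snd I0) 1 - axis (fst I0) 1) = -1" unfolding aP by simp
      moreover have "a \<bullet> (axis (snd I0) 1 - axis (fst I0) 1) = 1"
        using m eq by blast
      ultimately show False by simp
    qed
    have "(Root \<inter> {x. a \<bullet> x = 1}) \<inter> rel_interior Root = {}"
      by (rule face_of_disjoint_rel_interior[OF face neq])
    thus ?thesis using hsub clR unfolding rel_frontier_def by blast
  qed
  have phi_eq: "phi w = (\<Sum>I\<in>T. w I *\<^sub>R root_vec I)" if "w \<in> simplex_pts T" for w
  proof -
    have "T \<subseteq> {I. fst I \<noteq> snd I}" using adm_ne[OF adm] by blast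
    moreover have "\<forall>I\<in>{I. fst I \<noteq> snd I} - T. w I *\<^sub>R root_vec I = 0"
      using that unfolding simplex_pts_def by auto
    ultimately show ?thesis unfolding phi_def by (intro sum.mono_neutral_right) auto
  qed
  have injphi: "inj_on phi (simplex_pts T)"
  proof (rule inj_onI)
    fix w1 w2 assume w: "w1 \<in> simplex_pts T" "w2 \<in> simplex_pts T" "phi w1 = phi w2"
    have sw: "(\<Sum>I\<in>T. (w1 I - w2 I) *\<^sub>R root_vec I) = 0"
      using w phi_eq by (simp add: scaleR_diff_left sum_subtractf)
    have "\<forall>I\<in>T. w1 I - w2 I = 0" using LI[OF adm sw] by blast
    moreover have "\<forall>I. I \<notin> T \<longrightarrow> w1 I = 0 \<and> w2 I = 0" using w unfolding simplex_pts_def by simp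
    ultimately show "w1 = w2" by (intro ext) (metis eq_iff_diff_eq_0)
  qed
  have phisub: "phi ` simplex_pts T \<subseteq> convex hull (root_vec ` T)"
  proof
    fix y assume "y \<in> phi ` simplex_pts T"
    then obtain w where w: "w \<in> simplex_pts T" "y = phi w" by blast
    show "y \<in> convex hull (root_vec ` T)" unfolding w(2) phi_eq[OF w(1)]
      by (rule convex_sum[OF fin convex_convex_hull]) (use w(1) in \<open>auto simp: simplex_pts_def hull_inc\<close>)
  qed
  show ?thesis using inj nad ad sub_hull injphi phisub by blast
qed

end
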